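(* Let $V$ be a simple $\mathcal{R}$-module. If there exist a nonzero vector $v\in V$ and $M\in\mathbb{Z}_+$ such that $L_mv=G_mv=0$ for all $m\geq M$, then $V$ is a smooth module.
   Context: The Ramond algebra $\mathcal{R}=\mathcal{R}_{\bar 0}\oplus\mathcal{R}_{\bar 1}$ is the Lie superalgebra with basis $\{L_m,G_m,c\mid m\in\mathbb{Z}\}$, where $\mathcal{R}_{\bar 0}=\mathrm{span}\{L_m,c\}$, $\mathcal{R}_{\bar 1}=\mathrm{span}\{G_m\}$, and brackets $[L_m,L_n]=(m-n)L_{m+n}+\delta_{m+n,0}\frac{m^3-m}{12}c$, $[L_m,G_n]=(\frac m2-n)G_{m+n}$, $[G_m,G_n]=2L_{m+n}+\frac13\delta_{m+n,0}(m^2-\frac14)c$, $[\mathcal{R},c]=0$. Modules are $\mathbb{Z}_2$-graded (super)modules. For $m\in\mathbb{Z}$ let $\mathcal{R}_m=\mathrm{span}\{L_m,G_m,\delta_{m,0}c\}$. An $\mathcal{R}$-module is smooth if for every vector $u$ there is $n\in\mathbb{N}$ with $\mathcal{R}_mu=0$ for all $m>n$. *)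

theory Defs
  imports Complex_Main
begin

text \<open>V0, V1 are the even/odd parts; L m, G m, C are the
  actions of L_m, G_m and the central element c.\<close>

definition ramond_module ::
  "(complex \<Rightarrow> 'v::ab_group_add \<Rightarrow> 'v) \<Rightarrow> 'v set \<Rightarrow> 'v set \<Rightarrow>
   (int \<Rightarrow> 'v \<Rightarrow> 'v) \<Rightarrow> (int \<Rightarrow> 'v \<Rightarrow> 'v) \<Rightarrow> ('v \<Rightarrow> 'v) \<Rightarrow> bool" where
  "ramond_module sc V0 V1 L G C \<longleftrightarrow>
     vector_space sc \<and>
     (\<forall>m. Vector_Spaces.linear sc sc (L m)) \<and> (\<forall>m. Vector_Spaces.linear sc sc (G m)) \<and> Vector_Spaces.linear sc sc C \<and>
     module.subspace sc V0 \<and> module.subspace sc V1 \<and> V0 \<inter> V1 = {0} \<and>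
     (\<forall>x. \<exists>x0\<in>V0. \<exists>x1\<in>V1. x = x0 + x1) \<and>
     (\<forall>m. L m ` V0 \<subseteq> V0 \<and> L m ` V1 \<subseteq> V1) \<and>
     (\<forall>m. G m ` V0 \<subseteq> V1 \<and> G m ` V1 \<subseteq> V0) \<and>
     C ` V0 \<subseteq> V0 \<and> C ` V1 \<subseteq> V1 \<and>
     (\<forall>m n x. L m (L n x) - L n (L m x) =
        sc (of_int (m - n)) (L (m + n) x) +
        (if m + n = 0 then sc (of_int (m^3 - m) / 12) (C x) else 0)) \<and>
     (\<forall>m n x. L m (G n x) - G n (L m x) =
        sc (of_int m / 2 - of_int n) (G (m + n) x)) \<and>
     (\<forall>m n x. G m (G n x) + G n (G m x) =
        sc 2 (L (m + n) x) +
        (if m + n = 0 then sc ((of_int m ^ 2 - 1/4) / 3) (C x) else 0)) \<and>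
     (\<forall>m x. L m (C x) = C (L m x)) \<and> (\<forall>m x. G m (C x) = C (G m x))"

definition graded_submodule ::
  "(complex \<Rightarrow> 'v::ab_group_add \<Rightarrow> 'v) \<Rightarrow> 'v set \<Rightarrow> 'v set \<Rightarrow>
   (int \<Rightarrow> 'v \<Rightarrow> 'v) \<Rightarrow> (int \<Rightarrow> 'v \<Rightarrow> 'v) \<Rightarrow> ('v \<Rightarrow> 'v) \<Rightarrow> 'v set \<Rightarrow> bool" where
  "graded_submodule sc V0 V1 L G C W \<longleftrightarrow>
     module.subspace sc W \<and>
     (\<forall>m. L m ` W \<subseteq> W) \<and> (\<forall>m. G m ` W \<subseteq> W) \<and> C ` W \<subseteq> W \<and>
     (\<forall>w\<in>W. \<exists>w0\<in>W \<inter> V0. \<exists>w1\<in>W \<inter> V1. w = w0 + w1)"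

definition simple_ramond_module ::
  "(complex \<Rightarrow> 'v::ab_group_add \<Rightarrow> 'v) \<Rightarrow> 'v set \<Rightarrow> 'v set \<Rightarrow>
   (int \<Rightarrow> 'v \<Rightarrow> 'v) \<Rightarrow> (int \<Rightarrow> 'v \<Rightarrow> 'v) \<Rightarrow> ('v \<Rightarrow> 'v) \<Rightarrow> bool" where
  "simple_ramond_module sc V0 V1 L G C \<longleftrightarrow>
     ramond_module sc V0 V1 L G C \<and> (UNIV :: 'v set) \<noteq> {0} \<and>
     (\<forall>W. graded_submodule sc V0 V1 L G C W \<longrightarrow> W = {0} \<or> W = UNIV)"

text \<open>Smooth: every u is killed by R_m = span{L_m, G_m, delta_{m,0} c} for all m > n.\<close>

definition smooth_ramond_module ::
  "(int \<Rightarrow> 'v::ab_group_add \<Rightarrow> 'v) \<Rightarrow> (int \<Rightarrow> 'v \<Rightarrow> 'v) \<Rightarrow> ('v \<Rightarrow> 'v) \<Rightarrow> bool" where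
  "smooth_ramond_module L G C \<longleftrightarrow>
     (\<forall>u. \<exists>n::nat. \<forall>m::int. m > int n \<longrightarrow>
        L m u = 0 \<and> G m u = 0 \<and> (m = 0 \<longrightarrow> C u = 0))"

end

theory Submission
  imports Defs
begin

lemma lin_facts:
  assumes "Vector_Spaces.linear sc sc f"
  shows "f (x + y) = f x + f y" "f (sc c x) = sc c (f x)" "f 0 = 0"
proof -
  have h: "module_hom sc sc f" using assms by (simp add: Vector_Spaces.linear_def)
  show "f (x + y) = f x + f y" using h by (rule module_hom.add)
  show "f (sc c x) = sc c (f x)" using h by (rule module_hom.scale)
  show "f 0 = 0" using h by (rule module_hom.zero)
qed

theorem lemma4p2:
  fixes sc :: "complex \<Rightarrow> 'v::ab_group_add \<Rightarrow> 'v"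
    and V0 V1 :: "'v set"
    and L G :: "int \<Rightarrow> 'v \<Rightarrow> 'v"
    and C :: "'v \<Rightarrow> 'v"
  assumes "simple_ramond_module sc V0 V1 L G C"
    and "\<exists>v M. v \<noteq> 0 \<and> M > (0::int) \<and> (\<forall>m\<ge>M. L m v = 0 \<and> G m v = 0)"
  shows "smooth_ramond_module L G C"
proof -
  have R: "ramond_module sc V0 V1 L G C" and simp: "\<forall>W. graded_submodule sc V0 V1 L G C W \<longrightarrow> W = {0} \<or> W = UNIV"
    using assms(1) unfolding simple_ramond_module_def by auto
  note RD = R[unfolded ramond_module_def]
  have vs: "vector_space sc" using RD by blast
  have md: "module sc" using vs by (simp add: vector_space_def module_def)
  have sc0: "\<And>c. sc c 0 = 0" using module.scale_zero_right[OF md] .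
  have LL': "\<forall>m. Vector_Spaces.linear sc sc (L m)" using RD by (elim conjE) assumption
  have GL': "\<forall>m. Vector_Spaces.linear sc sc (G m)" using RD by (elim conjE) assumption
  have CL: "Vector_Spaces.linear sc sc C" using RD by (elim conjE) assumption
  have LL: "\<And>m. Vector_Spaces.linear sc sc (L m)" using LL' by (rule spec)
  have GL: "\<And>m. Vector_Spaces.linear sc sc (G m)" using GL' by (rule spec)
  have V0s: "module.subspace sc V0" using RD by (elim conjE) assumption
  have I01: "V0 \<inter> V1 = {0}" using RD by (elim conjE) assumption
  have Lp': "\<forall>m. L m ` V0 \<subseteq> V0 \<and> L m ` V1 \<subseteq> V1" using RD by (elim conjE) assumption
  have Gp': "\<forall>m. G m ` V0 \<subseteq> V1 \<and> G m ` V1 \<subseteq> V0" using RD by (elim conjE) assumption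
  have dec': "\<forall>x. \<exists>x0\<in>V0. \<exists>x1\<in>V1. x = x0 + x1" using RD by (elim conjE) assumption
  have Lp: "\<And>m. L m ` V0 \<subseteq> V0 \<and> L m ` V1 \<subseteq> V1" using Lp' by (rule spec)
  have Gp: "\<And>m. G m ` V0 \<subseteq> V1 \<and> G m ` V1 \<subseteq> V0" using Gp' by (rule spec)
  have dec: "\<And>x. \<exists>x0\<in>V0. \<exists>x1\<in>V1. x = x0 + x1" using dec' by (rule spec)
  have LLc': "\<forall>m n x. L m (L n x) - L n (L m x) =
        sc (of_int (m - n)) (L (m + n) x) +
        (if m + n = 0 then sc (of_int (m^3 - m) / 12) (C x) else 0)" using RD by (elim conjE) assumption
  have LGc': "\<forall>m n x. L m (G n x) - G n (L m x) =
        sc (of_int m / 2 - of_int n) (G (m + n) x)" using RD by (elim conjE) assumption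
  have GGc': "\<forall>m n x. G m (G n x) + G n (G m x) =
        sc 2 (L (m + n) x) +
        (if m + n = 0 then sc ((of_int m ^ 2 - 1/4) / 3) (C x) else 0)" using RD by (elim conjE) assumption
  have LCc': "\<forall>m x. L m (C x) = C (L m x)" using RD by (elim conjE) assumption
  have GCc': "\<forall>m x. G m (C x) = C (G m x)" using RD by (elim conjE) assumption
  note LLc = LLc'[rule_format] and LGc = LGc'[rule_format] and GGc = GGc'[rule_format]
    and LCc = LCc'[rule_format] and GCc = GCc'[rule_format]
  have V0n: "\<And>a b. a \<in> V0 \<Longrightarrow> b \<in> V0 \<Longrightarrow> - a \<in> V0"
    using module.subspace_neg[OF md V0s] by blast
  have split0: "\<And>a b. a \<in> V0 \<Longrightarrow> b \<in> V1 \<Longrightarrow> a + b = 0 \<Longrightarrow> a = 0 \<and> b = 0"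
  proof -
    fix a b assume a: "a \<in> V0" and b: "b \<in> V1" and s: "a + b = 0"
    have "b = - a" using s by (simp add: eq_neg_iff_add_eq_0 add.commute)
    hence "b \<in> V0" using V0n[OF a a] by simp
    hence "b = 0" using b I01 by blast
    thus "a = 0 \<and> b = 0" using s by simp
  qed
  define W where "W = {w. \<exists>N::int. \<forall>m\<ge>N. L m w = 0 \<and> G m w = 0}"
  have W0: "0 \<in> W" unfolding W_def using lin_facts(3)[OF LL] lin_facts(3)[OF GL] by auto
  have Wadd: "x + y \<in> W" if hx: "x \<in> W" and hy: "y \<in> W" for x y
  proof -
    obtain N1 where N1: "\<forall>m\<ge>N1. L m x = 0 \<and> G m x = 0" using hx W_def by auto
    obtain N2 where N2: "\<forall>m\<ge>N2. L m y = 0 \<and> G m y = 0" using hy W_def by auto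
    show ?thesis unfolding W_def
      by (rule CollectI, rule exI[of _ "max N1 N2"]) (simp add: N1 N2 lin_facts(1)[OF LL] lin_facts(1)[OF GL])
  qed
  have Wsc: "sc c x \<in> W" if hx: "x \<in> W" for c x
  proof -
    obtain N1 where N1: "\<forall>m\<ge>N1. L m x = 0 \<and> G m x = 0" using hx W_def by auto
    show ?thesis unfolding W_def
      by (rule CollectI, rule exI[of _ N1]) (simp add: N1 lin_facts(2)[OF LL] lin_facts(2)[OF GL] sc0)
  qed
  have Wsub: "module.subspace sc W"
    using W0 Wadd Wsc by (simp add: module.subspace_def[OF md])
  have WL: "L k x \<in> W" and WG: "G k x \<in> W" and WC: "C x \<in> W" if hx: "x \<in> W" for k x
  proof -
    obtain N where N: "\<forall>m\<ge>N. L m x = 0 \<and> G m x = 0" using hx W_def by auto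
    define N' where "N' = max N 1 + \<bar>k\<bar>"
    have big: "m + k \<ge> N" "m + k \<noteq> 0" "k + m \<noteq> 0" "m \<ge> N" "k + m \<ge> N" if "m \<ge> N'" for m
      using that unfolding N'_def by auto
    have L0: "\<And>k. L k 0 = 0" using lin_facts(3)[OF LL] .
    have G0: "\<And>k. G k 0 = 0" using lin_facts(3)[OF GL] .
    have C0: "C 0 = 0" using lin_facts(3)[OF CL] .
    show "L k x \<in> W" unfolding W_def
    proof (rule CollectI, rule exI[of _ N'], intro allI impI conjI)
      fix m assume m: "m \<ge> N'"
      show "L m (L k x) = 0" using LLc[of m k x] big[OF m] N L0 sc0 by simp
      show "G m (L k x) = 0" using LGc[of k m x] big[OF m] N G0 L0 sc0 by simp
    qed
    show "G k x \<in> W" unfolding W_def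
    proof (rule CollectI, rule exI[of _ N'], intro allI impI conjI)
      fix m assume m: "m \<ge> N'"
      show "L m (G k x) = 0" using LGc[of m k x] big[OF m] N G0 sc0 by (simp add: add.commute)
      have "G m (G k x) + G k (G m x) = 0" using GGc[of m k x] big[OF m] N sc0 by simp
      thus "G m (G k x) = 0" using big[OF m] N G0 by simp
    qed
    show "C x \<in> W" unfolding W_def
      by (rule CollectI, rule exI[of _ N]) (simp add: LCc GCc N C0)
  qed
  have Wgr: "\<exists>w0\<in>W \<inter> V0. \<exists>w1\<in>W \<inter> V1. w = w0 + w1" if hx: "w \<in> W" for w
  proof -
    obtain N where N: "\<forall>m\<ge>N. L m w = 0 \<and> G m w = 0" using hx W_def by auto
    obtain w0 w1 where w0: "w0 \<in> V0" and w1: "w1 \<in> V1" and e: "w = w0 + w1" using dec by blast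
    have "\<forall>m\<ge>N. L m w0 = 0 \<and> G m w0 = 0" "\<forall>m\<ge>N. L m w1 = 0 \<and> G m w1 = 0"
    proof (safe)
      fix m assume m: "N \<le> m"
      have a0: "L m (w0 + w1) = 0" "G m (w0 + w1) = 0" using N m e by simp_all
      have a: "L m w0 + L m w1 = 0" using a0(1) lin_facts(1)[OF LL, of m w0 w1] by simp
      have b0: "G m w0 + G m w1 = 0" using a0(2) lin_facts(1)[OF GL, of m w0 w1] by simp
      have b: "G m w1 + G m w0 = 0" using b0 by (simp add: add.commute)
      have la: "L m w0 \<in> V0" "L m w1 \<in> V1" using Lp w0 w1 by blast+
      have gb: "G m w1 \<in> V0" "G m w0 \<in> V1" using Gp w0 w1 by blast+
      show "L m w0 = 0" "L m w1 = 0" using split0[OF la a] by auto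
      show "G m w0 = 0" "G m w1 = 0" using split0[OF gb b] by auto
    qed
    hence "w0 \<in> W" "w1 \<in> W" unfolding W_def by blast+
    thus ?thesis using w0 w1 e by blast
  qed
  have "graded_submodule sc V0 V1 L G C W"
    unfolding graded_submodule_def using Wsub WL WG WC Wgr by blast
  moreover obtain v M where v: "v \<noteq> 0" "\<forall>m\<ge>M. L m v = 0 \<and> G m v = 0" using assms(2) by auto
  moreover have "v \<in> W" using v unfolding W_def by auto
  ultimately have WU: "W = UNIV" using simp by blast
  show ?thesis unfolding smooth_ramond_module_def
  proof
    fix u
    have "u \<in> W" using WU by simp
    then obtain N where N: "\<forall>m\<ge>N. L m u = 0 \<and> G m u = 0" unfolding W_def by auto
    show "\<exists>n::nat. \<forall>m::int. m > int n \<longrightarrow> L m u = 0 \<and> G m u = 0 \<and> (m = 0 \<longrightarrow> C u = 0)"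
      by (rule exI[of _ "nat \<bar>N\<bar>"]) (use N in auto)
  qed
qed

end
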